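(* The scheme $CD$ (described in the context) can be rewritten with the CG-like structure of the following scheme, called $CD$-red: Step 0: set $k=0$, $y_0\in\mathbb{R}^n$, $r_0:=b-Ay_0$. If $r_0=0$ stop; else set $p_0:=r_0$, $k=k+1$. Compute $a_0:=r_0^Tp_0/p_0^TAp_0$, $\gamma_0:=-a_0$, $y_1:=y_0+a_0p_0$, $r_1:=r_0-a_0Ap_0$. If $r_1=0$ stop; else set $\sigma_0:=\gamma_0\|Ap_0\|^2/p_0^TAp_0$, $\beta_0:=-(1+\sigma_0)$, $p_1:=r_1+\beta_0p_0$, $k=k+1$. Step $k$: compute $a_{k-1}:=r_{k-1}^Tp_{k-1}/p_{k-1}^TAp_{k-1}$, $y_k:=y_{k-1}+a_{k-1}p_{k-1}$, $r_k:=r_{k-1}-a_{k-1}Ap_{k-1}$. If $r_k=0$ stop; else compute $\gamma_{k-1}$ by the recursion below, set $\sigma_{k-1}:=\gamma_{k-1}\|Ap_{k-1}\|^2/p_{k-1}^TAp_{k-1}$, $\beta_{k-1}:=-(1+\sigma_{k-1})$, $p_k:=r_k+\beta_{k-1}p_{k-1}$, $k=k+1$, and repeat Step $k$, provided that the sequence $\{\gamma_k\}$ satisfies $\gamma_0:=-a_0$ and \[ \gamma_k := -\frac{\gamma_{k-1}^2\|Ap_{k-1}\|^2+\gamma_{k-1}\,p_{k-1}^TAp_{k-1}}{p_k^TAp_k},\qquad k\ge 1 . \] In particular, the positions $\gamma_i=-a_i$, $i\ge 0$, in $CD$ satisfy this recursion.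
   Context: Consider the linear system $Ay=b$ with $A\in\mathbb{R}^{n\times n}$ symmetric positive definite and $b\in\mathbb{R}^n$. The $CD$ class is the following iteration, with parameters $\gamma_k\in\mathbb{R}\setminus\{0\}$ for all $k\ge0$. Step 0: set $k=0$, $y_0\in\mathbb{R}^n$, $r_0:=b-Ay_0$, $\gamma_0\neq0$. If $r_0=0$ stop; else set $p_0:=r_0$, $k=k+1$; compute $a_0:=r_0^Tp_0/p_0^TAp_0$, $y_1:=y_0+a_0p_0$, $r_1:=r_0-a_0Ap_0$. If $r_1=0$ stop; else set $\sigma_0:=\gamma_0\|Ap_0\|^2/p_0^TAp_0$, $p_1:=\gamma_0Ap_0-\sigma_0p_0$, $k=k+1$. Step $k$: compute $a_{k-1}:=r_{k-1}^Tp_{k-1}/p_{k-1}^TAp_{k-1}$, $y_k:=y_{k-1}+a_{k-1}p_{k-1}$, $r_k:=r_{k-1}-a_{k-1}Ap_{k-1}$. If $r_k=0$ stop; else set $\sigma_{k-1}:=\gamma_{k-1}\|Ap_{k-1}\|^2/p_{k-1}^TAp_{k-1}$, $\omega_{k-1}:=\frac{\gamma_{k-1}}{\gamma_{k-2}}\frac{p_{k-1}^TAp_{k-1}}{p_{k-2}^TAp_{k-2}}$, $p_k:=\gamma_{k-1}Ap_{k-1}-\sigma_{k-1}p_{k-1}-\omega_{k-1}p_{k-2}$, $k=k+1$, and repeat Step $k$. *)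

theory Defs
  imports "HOL-Analysis.Analysis"
begin

text \<open>The CD iteration with parameter sequence g (= gamma), computed without the
stopping test (the theorem only speaks about indices before termination).
The state at index k is (y_k, r_k, p_k, p_{k-1}), with p_{-1} := 0 (never used).\<close>

fun cd_state :: "real^'n^'n \<Rightarrow> real^'n \<Rightarrow> real^'n \<Rightarrow> (nat \<Rightarrow> real) \<Rightarrow> nat
                 \<Rightarrow> (real^'n) \<times> (real^'n) \<times> (real^'n) \<times> (real^'n)" where
  "cd_state A b y0 g 0 = (y0, b - A *v y0, b - A *v y0, 0)"
| "cd_state A b y0 g (Suc k) = (case cd_state A b y0 g k of (y, r, p, q) \<Rightarrow>
     let a = (r \<bullet> p) / (p \<bullet> (A *v p));
         y' = y + a *\<^sub>R p;
         r' = r - a *\<^sub>R (A *v p);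
         \<sigma> = g k * (norm (A *v p))^2 / (p \<bullet> (A *v p));
         p' = (if k = 0 then g k *\<^sub>R (A *v p) - \<sigma> *\<^sub>R p
               else g k *\<^sub>R (A *v p) - \<sigma> *\<^sub>R p
                    - ((g k / g (k - 1)) * ((p \<bullet> (A *v p)) / (q \<bullet> (A *v q)))) *\<^sub>R q)
     in (y', r', p', p))"

definition cd_y where "cd_y A b y0 g k = fst (cd_state A b y0 g k)"
definition cd_r where "cd_r A b y0 g k = fst (snd (cd_state A b y0 g k))"
definition cd_p where "cd_p A b y0 g k = fst (snd (snd (cd_state A b y0 g k)))"
definition cd_a where
  "cd_a A b y0 g k = (cd_r A b y0 g k \<bullet> cd_p A b y0 g k)
                     / (cd_p A b y0 g k \<bullet> (A *v cd_p A b y0 g k))"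

fun red_state :: "real^'n^'n \<Rightarrow> real^'n \<Rightarrow> real^'n \<Rightarrow> nat
                 \<Rightarrow> (real^'n) \<times> (real^'n) \<times> (real^'n) \<times> real" where
  "red_state A b y0 0 = (let r = b - A *v y0; p = r; a = (r \<bullet> p) / (p \<bullet> (A *v p))
                         in (y0, r, p, - a))"
| "red_state A b y0 (Suc k) = (case red_state A b y0 k of (y, r, p, g) \<Rightarrow>
     let a = (r \<bullet> p) / (p \<bullet> (A *v p));
         y' = y + a *\<^sub>R p;
         r' = r - a *\<^sub>R (A *v p);
         \<sigma> = g * (norm (A *v p))^2 / (p \<bullet> (A *v p));
         \<beta> = - (1 + \<sigma>);
         p' = r' + \<beta> *\<^sub>R p;
         g' = - (g^2 * (norm (A *v p))^2 + g * (p \<bullet> (A *v p))) / (p' \<bullet> (A *v p'))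
     in (y', r', p', g'))"

definition red_y where "red_y A b y0 k = fst (red_state A b y0 k)"
definition red_r where "red_r A b y0 k = fst (snd (red_state A b y0 k))"
definition red_p where "red_p A b y0 k = fst (snd (snd (red_state A b y0 k)))"
definition red_g where "red_g A b y0 k = snd (snd (snd (red_state A b y0 k)))"

definition gamma_rec :: "real^'n^'n \<Rightarrow> real^'n \<Rightarrow> real^'n \<Rightarrow> (nat \<Rightarrow> real) \<Rightarrow> nat \<Rightarrow> bool" where
  "gamma_rec A b y0 g m \<longleftrightarrow> (\<forall>k. 1 \<le> k \<and> k < m \<longrightarrow>
     g k = - (g (k - 1) ^ 2 * (norm (A *v cd_p A b y0 g (k - 1)))^2
              + g (k - 1) * (cd_p A b y0 g (k - 1) \<bullet> (A *v cd_p A b y0 g (k - 1))))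
           / (cd_p A b y0 g k \<bullet> (A *v cd_p A b y0 g k)))"

end

theory Submission imports Defs begin

lemma sym_dot:
  fixes A :: "real^'n^'n"
  assumes "transpose A = A"
  shows "x \<bullet> (A *v y) = y \<bullet> (A *v x)"
proof -
  have "x \<bullet> (A *v y) = (x v* A) \<bullet> y" by (simp add: dot_lmul_matrix)
  also have "x v* A = A *v x" by (metis assms vector_transpose_matrix)
  finally show ?thesis by (simp add: inner_commute)
qed

context
  fixes A :: "real^'n^'n" and b y0 :: "real^'n" and g :: "nat \<Rightarrow> real"
begin

abbreviation "YY \<equiv> cd_y A b y0 g"
abbreviation "RR \<equiv> cd_r A b y0 g"
abbreviation "PP \<equiv> cd_p A b y0 g"
abbreviation "AA \<equiv> cd_a A b y0 g"

lemma q_Suc: "snd (snd (snd (cd_state A b y0 g (Suc k)))) = PP k"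
  by (cases "cd_state A b y0 g k") (simp add: cd_p_def Let_def)

lemma Y_Suc: "YY (Suc k) = YY k + AA k *\<^sub>R PP k"
  by (cases "cd_state A b y0 g k") (simp add: cd_p_def cd_y_def cd_r_def cd_a_def Let_def)

lemma R_Suc: "RR (Suc k) = RR k - AA k *\<^sub>R (A *v PP k)"
  by (cases "cd_state A b y0 g k") (simp add: cd_p_def cd_y_def cd_r_def cd_a_def Let_def)

lemma P_1: "PP (Suc 0) = g 0 *\<^sub>R (A *v PP 0) - (g 0 * (norm (A *v PP 0))^2 / (PP 0 \<bullet> (A *v PP 0))) *\<^sub>R PP 0"
  by (simp add: cd_p_def Let_def)

lemma P_SS: "PP (Suc (Suc k)) = g (Suc k) *\<^sub>R (A *v PP (Suc k))
   - (g (Suc k) * (norm (A *v PP (Suc k)))^2 / (PP (Suc k) \<bullet> (A *v PP (Suc k)))) *\<^sub>R PP (Suc k)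
   - ((g (Suc k) / g k) * ((PP (Suc k) \<bullet> (A *v PP (Suc k))) / (PP k \<bullet> (A *v PP k)))) *\<^sub>R PP k"
proof -
  obtain y r p q where e: "cd_state A b y0 g (Suc k) = (y, r, p, q)" by (cases "cd_state A b y0 g (Suc k)") auto
  have q: "q = PP k" using q_Suc[of k] e by simp
  have p: "p = PP (Suc k)" using e by (simp add: cd_p_def)
  show ?thesis
    apply (subst cd_p_def)
    apply (subst cd_state.simps(2))
    apply (simp only: e q[symmetric] p[symmetric])
    apply (simp add: Let_def)
    done
qed

lemma R0: "RR 0 = b - A *v y0" and P0: "PP 0 = b - A *v y0" and Y0: "YY 0 = y0"
  by (simp_all add: cd_p_def cd_y_def cd_r_def)


lemma pAp_zero:
  assumes pd: "\<forall>x. x \<noteq> 0 \<longrightarrow> 0 < x \<bullet> (A *v x)" and "p \<bullet> (A *v p) = 0"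
  shows "p = 0"
  using assms by force

lemma gen_conj:
  assumes pd: "\<forall>x. x \<noteq> 0 \<longrightarrow> 0 < x \<bullet> (A *v x)"
  shows "(c *\<^sub>R (A *v p)) \<bullet> (A *v p) - ((c * (norm (A *v p))^2 / (p \<bullet> (A *v p))) *\<^sub>R p) \<bullet> (A *v p) = 0"
proof (cases "p = 0")
  case True then show ?thesis by simp
next
  case False
  then have "p \<bullet> (A *v p) \<noteq> 0" using pd by force
  moreover have "(c *\<^sub>R (A *v p)) \<bullet> (A *v p) = c * (norm (A *v p))^2" by (simp add: dot_square_norm)
  ultimately show ?thesis by simp
qed

lemma conj:
  assumes sym: "transpose A = A" and pd: "\<forall>x. x \<noteq> 0 \<longrightarrow> 0 < x \<bullet> (A *v x)"
  shows "PP (Suc k) \<bullet> (A *v PP k) = 0"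
proof (induction k)
  case 0
  show ?case unfolding P_1 inner_diff_left by (rule gen_conj[OF pd])
next
  case (Suc k)
  have "PP k \<bullet> (A *v PP (Suc k)) = 0" using Suc sym_dot[OF sym] by metis
  then show ?case unfolding P_SS
    by (simp only: inner_diff_left gen_conj[OF pd]) simp
qed

definition bet :: "nat \<Rightarrow> real" where
  "bet j = - (1 + g j * (norm (A *v PP j))^2 / (PP j \<bullet> (A *v PP j)))"

lemma step:
  assumes sym: "transpose A = A" and pd: "\<forall>x. x \<noteq> 0 \<longrightarrow> 0 < x \<bullet> (A *v x)"
    and F1: "RR j \<bullet> PP j = (norm (RR j))^2"
    and F2: "RR j \<bullet> (A *v PP j) = PP j \<bullet> (A *v PP j)"
    and F3: "PP (Suc j) = RR j - PP j + g j *\<^sub>R (A *v PP j)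
                 - (g j * (norm (A *v PP j))^2 / (PP j \<bullet> (A *v PP j))) *\<^sub>R PP j"
    and G: "g j = - AA j" and NZ: "RR j \<noteq> 0"
  shows "PP (Suc j) = RR (Suc j) + bet j *\<^sub>R PP j"
    and "RR (Suc j) \<bullet> PP (Suc j) = (norm (RR (Suc j)))^2"
    and "(norm (RR (Suc j)))^2 = (g j)^2 * (norm (A *v PP j))^2 + g j * (PP j \<bullet> (A *v PP j))"
proof -
  define p where "p = PP j"
  define r where "r = RR j"
  define s where "s = p \<bullet> (A *v p)"
  define c where "c = g j"
  have s0: "s \<noteq> 0"
  proof
    assume "s = 0"
    then have "p = 0" using pAp_zero[OF pd, of p] s_def by simp
    then have "norm r ^ 2 = 0" using F1 p_def r_def by simp
    then show False using NZ r_def by simp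
  qed
  have cs: "c * s = - (r \<bullet> p)" using G s0 unfolding c_def s_def p_def r_def cd_a_def by simp
  have r': "RR (Suc j) = r + c *\<^sub>R (A *v p)" unfolding R_Suc using G c_def r_def p_def by simp
  have bt: "bet j = - (1 + c * (norm (A *v p))^2 / s)" unfolding bet_def c_def p_def s_def by simp
  show a: "PP (Suc j) = RR (Suc j) + bet j *\<^sub>R PP j"
    unfolding r' bt F3 by (simp add: p_def r_def c_def s_def algebra_simps)
  have aps: "(A *v p) \<bullet> p = s" by (simp add: s_def inner_commute)
  have r'p: "RR (Suc j) \<bullet> p = 0" unfolding r' using cs by (simp add: inner_add_left aps)
  show "RR (Suc j) \<bullet> PP (Suc j) = (norm (RR (Suc j)))^2"
    unfolding a using r'p by (simp add: inner_add_right p_def dot_square_norm)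
  have "(norm (RR (Suc j)))^2 = RR (Suc j) \<bullet> RR (Suc j)" by (simp add: dot_square_norm)
  also have "\<dots> = r \<bullet> r + 2 * c * (r \<bullet> (A *v p)) + c^2 * ((A *v p) \<bullet> (A *v p))"
    unfolding r' by (simp add: inner_add_left inner_add_right inner_commute power2_eq_square algebra_simps)
  also have "\<dots> = c^2 * (norm (A *v p))^2 + c * s"
    using F1 F2 cs unfolding p_def[symmetric] r_def[symmetric] s_def[symmetric]
    by (simp add: dot_square_norm algebra_simps power2_eq_square)
  finally show "(norm (RR (Suc j)))^2 = (g j)^2 * (norm (A *v PP j))^2 + g j * (PP j \<bullet> (A *v PP j))"
    by (simp add: c_def p_def s_def)
qed


lemma S:
  assumes sym: "transpose A = A" and pd: "\<forall>x. x \<noteq> 0 \<longrightarrow> 0 < x \<bullet> (A *v x)"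
  shows "(\<forall>i\<le>j. g i = - AA i) \<Longrightarrow> (\<forall>i\<le>j. RR i \<noteq> 0) \<Longrightarrow>
     RR j \<bullet> PP j = (norm (RR j))^2 \<and> RR j \<bullet> (A *v PP j) = PP j \<bullet> (A *v PP j) \<and>
     PP (Suc j) = RR j - PP j + g j *\<^sub>R (A *v PP j)
                 - (g j * (norm (A *v PP j))^2 / (PP j \<bullet> (A *v PP j))) *\<^sub>R PP j"
proof (induction j)
  case 0
  show ?case unfolding P_1 by (simp add: R0 P0 dot_square_norm)
next
  case (Suc j)
  then have IH: "RR j \<bullet> PP j = (norm (RR j))^2" "RR j \<bullet> (A *v PP j) = PP j \<bullet> (A *v PP j)"
     "PP (Suc j) = RR j - PP j + g j *\<^sub>R (A *v PP j)
                 - (g j * (norm (A *v PP j))^2 / (PP j \<bullet> (A *v PP j))) *\<^sub>R PP j" by auto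
  have G: "g j = - AA j" "g (Suc j) = - AA (Suc j)" and NZ: "RR j \<noteq> 0" "RR (Suc j) \<noteq> 0"
    using Suc.prems by auto
  note st = step[OF sym pd IH G(1) NZ(1)]
  define p where "p = PP j"
  define p' where "p' = PP (Suc j)"
  define r' where "r' = RR (Suc j)"
  define s where "s = p \<bullet> (A *v p)"
  define s' where "s' = p' \<bullet> (A *v p')"
  define c where "c = g j"
  define c' where "c' = g (Suc j)"
  define \<beta> where "\<beta> = bet j"
  have a: "p' = r' + \<beta> *\<^sub>R p" using st(1) p_def p'_def r'_def \<beta>_def by simp
  have b: "r' \<bullet> p' = (norm r')^2" using st(2) p'_def r'_def by simp
  have cc: "(norm r')^2 = c^2 * (norm (A *v p))^2 + c * s" using st(3) r'_def c_def p_def s_def by simp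
  have cj: "p \<bullet> (A *v p') = 0" using conj[OF sym pd, of j] sym_dot[OF sym] p_def p'_def by metis
  have s'0: "s' \<noteq> 0"
  proof
    assume "s' = 0"
    then have "p' = 0" using pAp_zero[OF pd, of p'] s'_def by simp
    then show False using b NZ(2) r'_def by simp
  qed
  have s0: "s \<noteq> 0"
  proof
    assume "s = 0"
    then have "p = 0" using pAp_zero[OF pd, of p] s_def by simp
    then show False using IH(1) NZ(1) p_def by simp
  qed
  have cs: "c * s = - ((norm (RR j))^2)" using G(1) s0 IH(1) unfolding c_def s_def p_def cd_a_def by simp
  have c0: "c \<noteq> 0" using cs NZ(1) by auto
  have cs': "c' * s' = - ((norm r')^2)" using G(2) s'0 b unfolding c'_def s'_def p'_def r'_def cd_a_def by simp
  have om: "(c' / c) * (s' / s) = \<beta>"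
  proof -
    have "(c' / c) * (s' / s) = (c' * s') / (c * s)" by simp
    also have "\<dots> = - (c^2 * (norm (A *v p))^2 + c * s) / (c * s)" using cs' cc by simp
    also have "\<dots> = \<beta>" unfolding \<beta>_def bet_def using c0 s0
      by (simp add: p_def[symmetric] c_def[symmetric] s_def[symmetric] field_simps power2_eq_square)
    finally show ?thesis .
  qed
  show ?case
  proof (intro conjI)
    show "RR (Suc j) \<bullet> PP (Suc j) = (norm (RR (Suc j)))\<^sup>2" by (rule st(2))
    have "r' \<bullet> (A *v p') = (p' - \<beta> *\<^sub>R p) \<bullet> (A *v p')" using a by simp
    also have "\<dots> = s'" using cj by (simp add: inner_diff_left s'_def)
    finally show "RR (Suc j) \<bullet> (A *v PP (Suc j)) = PP (Suc j) \<bullet> (A *v PP (Suc j))"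
      using r'_def s'_def p'_def by simp
    have "PP (Suc (Suc j)) = c' *\<^sub>R (A *v p') - (c' * (norm (A *v p'))^2 / s') *\<^sub>R p' - \<beta> *\<^sub>R p"
      unfolding P_SS om[symmetric] by (simp add: c'_def c_def p_def p'_def s_def s'_def)
    also have "\<dots> = r' - p' + c' *\<^sub>R (A *v p') - (c' * (norm (A *v p'))^2 / s') *\<^sub>R p'"
      using a by (simp add: algebra_simps)
    finally show "PP (Suc (Suc j)) = RR (Suc j) - PP (Suc j) + g (Suc j) *\<^sub>R (A *v PP (Suc j)) -
      (g (Suc j) * (norm (A *v PP (Suc j)))\<^sup>2 / (PP (Suc j) \<bullet> (A *v PP (Suc j)))) *\<^sub>R PP (Suc j)"
      by (simp add: r'_def p'_def c'_def s'_def)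
  qed
qed

end

lemma red_Suc:
  "red_y A b y0 (Suc k) = red_y A b y0 k + (red_r A b y0 k \<bullet> red_p A b y0 k / (red_p A b y0 k \<bullet> (A *v red_p A b y0 k))) *\<^sub>R red_p A b y0 k"
  "red_r A b y0 (Suc k) = red_r A b y0 k - (red_r A b y0 k \<bullet> red_p A b y0 k / (red_p A b y0 k \<bullet> (A *v red_p A b y0 k))) *\<^sub>R (A *v red_p A b y0 k)"
  "red_p A b y0 (Suc k) = red_r A b y0 (Suc k) + (- (1 + red_g A b y0 k * (norm (A *v red_p A b y0 k))^2 / (red_p A b y0 k \<bullet> (A *v red_p A b y0 k)))) *\<^sub>R red_p A b y0 k"
  "red_g A b y0 (Suc k) = - ((red_g A b y0 k)^2 * (norm (A *v red_p A b y0 k))^2 + red_g A b y0 k * (red_p A b y0 k \<bullet> (A *v red_p A b y0 k))) / (red_p A b y0 (Suc k) \<bullet> (A *v red_p A b y0 (Suc k)))"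
  by (cases "red_state A b y0 k"; simp add: red_y_def red_r_def red_p_def red_g_def Let_def)+

lemma red_0: "red_y A b y0 0 = y0" "red_r A b y0 0 = b - A *v y0" "red_p A b y0 0 = b - A *v y0"
  "red_g A b y0 0 = - ((b - A *v y0) \<bullet> (b - A *v y0) / ((b - A *v y0) \<bullet> (A *v (b - A *v y0))))"
  by (simp_all add: red_y_def red_r_def red_p_def red_g_def Let_def)


theorem lemma4:
  fixes A :: "real^'n^'n" and b y0 :: "real^'n" and g :: "nat \<Rightarrow> real" and m :: nat
  assumes sym: "transpose A = A"
    and pd: "\<forall>x. x \<noteq> 0 \<longrightarrow> 0 < x \<bullet> (A *v x)"
    and gnz: "\<forall>k. g k \<noteq> 0"
    and nostop: "\<forall>j\<le>m. cd_r A b y0 g j \<noteq> 0"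
  shows "((g 0 = - cd_a A b y0 g 0 \<and> gamma_rec A b y0 g m) \<longrightarrow>
            (\<forall>k\<le>Suc m. cd_y A b y0 g k = red_y A b y0 k \<and> cd_r A b y0 g k = red_r A b y0 k)
          \<and> (\<forall>k\<le>m. cd_p A b y0 g k = red_p A b y0 k)
          \<and> (\<forall>k<m. red_g A b y0 k = g k))
       \<and> ((\<forall>k<m. g k = - cd_a A b y0 g k) \<longrightarrow> gamma_rec A b y0 g m)"
proof -
  have key: "cd_r A b y0 g (Suc k) \<bullet> cd_p A b y0 g (Suc k) =
       (g k)^2 * (norm (A *v cd_p A b y0 g k))^2 + g k * (cd_p A b y0 g k \<bullet> (A *v cd_p A b y0 g k))
     \<and> cd_p A b y0 g (Suc k) = cd_r A b y0 g (Suc k) + bet A b y0 g k *\<^sub>R cd_p A b y0 g k"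
    if H: "\<forall>i\<le>k. g i = - cd_a A b y0 g i" and km: "k < m" for k
  proof -
    have NZ: "\<forall>i\<le>k. cd_r A b y0 g i \<noteq> 0" using nostop km by auto
    note SS = S[OF sym pd H NZ]
    have Gk: "g k = - cd_a A b y0 g k" using H by simp
    have Rk: "cd_r A b y0 g k \<noteq> 0" using NZ by simp
    note st = step[OF sym pd conjunct1[OF SS] conjunct1[OF conjunct2[OF SS]] conjunct2[OF conjunct2[OF SS]] Gk Rk]
    show ?thesis using st by simp
  qed
  show ?thesis
  proof (intro conjI impI)
    assume h: "g 0 = - cd_a A b y0 g 0 \<and> gamma_rec A b y0 g m"
    have Hk: "\<forall>i\<le>k. i < m \<longrightarrow> g i = - cd_a A b y0 g i" for k
    proof (induction k)
      case 0 then show ?case using h by auto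
    next
      case (Suc k)
      show ?case
      proof (intro allI impI)
        fix i assume i: "i \<le> Suc k" "i < m"
        show "g i = - cd_a A b y0 g i"
        proof (cases "i \<le> k")
          case True then show ?thesis using Suc i by auto
        next
          case False
          then have ie: "i = Suc k" using i by simp
          have "\<forall>i\<le>k. g i = - cd_a A b y0 g i" using Suc i ie by auto
          moreover have "k < m" using i ie by simp
          ultimately have kk: "cd_r A b y0 g (Suc k) \<bullet> cd_p A b y0 g (Suc k) =
       (g k)^2 * (norm (A *v cd_p A b y0 g k))^2 + g k * (cd_p A b y0 g k \<bullet> (A *v cd_p A b y0 g k))"
            using key by blast
          have "g (Suc k) = - ((g k)^2 * (norm (A *v cd_p A b y0 g k))^2 + g k * (cd_p A b y0 g k \<bullet> (A *v cd_p A b y0 g k)))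
           / (cd_p A b y0 g (Suc k) \<bullet> (A *v cd_p A b y0 g (Suc k)))"
            using h i ie unfolding gamma_rec_def by force
          then show ?thesis using kk i ie by (simp add: cd_a_def add_divide_distrib diff_divide_distrib)
        qed
      qed
    qed
    then have H: "\<forall>i<m. g i = - cd_a A b y0 g i" by blast
    have E: "k \<le> m \<longrightarrow> red_y A b y0 k = cd_y A b y0 g k \<and> red_r A b y0 k = cd_r A b y0 g k
       \<and> red_p A b y0 k = cd_p A b y0 g k \<and> (k < m \<longrightarrow> red_g A b y0 k = g k)" for k
    proof (induction k)
      case 0
      show ?case using h by (simp add: red_0 R0 P0 Y0 cd_a_def)
    next
      case (Suc k)
      show ?case
      proof
        assume km: "Suc k \<le> m"
        then have IH: "red_y A b y0 k = cd_y A b y0 g k" "red_r A b y0 k = cd_r A b y0 g k"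
          "red_p A b y0 k = cd_p A b y0 g k" "red_g A b y0 k = g k" using Suc by auto
        have kk: "cd_p A b y0 g (Suc k) = cd_r A b y0 g (Suc k) + bet A b y0 g k *\<^sub>R cd_p A b y0 g k"
          using key[of k] H km by auto
        have y: "red_y A b y0 (Suc k) = cd_y A b y0 g (Suc k)"
          by (simp add: red_Suc IH Y_Suc cd_a_def)
        have r: "red_r A b y0 (Suc k) = cd_r A b y0 g (Suc k)"
          by (simp add: red_Suc IH R_Suc cd_a_def)
        have p: "red_p A b y0 (Suc k) = cd_p A b y0 g (Suc k)"
          by (simp add: red_Suc(3) IH r kk bet_def)
        have gg: "red_g A b y0 (Suc k) = g (Suc k)" if "Suc k < m"
        proof -
          have "g (Suc k) = - ((g k)^2 * (norm (A *v cd_p A b y0 g k))^2 + g k * (cd_p A b y0 g k \<bullet> (A *v cd_p A b y0 g k)))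
           / (cd_p A b y0 g (Suc k) \<bullet> (A *v cd_p A b y0 g (Suc k)))"
            using h that unfolding gamma_rec_def by force
          then show ?thesis by (simp add: red_Suc(4) IH p)
        qed
        show "red_y A b y0 (Suc k) = cd_y A b y0 g (Suc k) \<and> red_r A b y0 (Suc k) = cd_r A b y0 g (Suc k)
          \<and> red_p A b y0 (Suc k) = cd_p A b y0 g (Suc k) \<and> (Suc k < m \<longrightarrow> red_g A b y0 (Suc k) = g (Suc k))"
          using y r p gg by blast
      qed
    qed
    show "\<forall>k\<le>Suc m. cd_y A b y0 g k = red_y A b y0 k \<and> cd_r A b y0 g k = red_r A b y0 k"
    proof (intro allI impI)
      fix k assume k: "k \<le> Suc m"
      show "cd_y A b y0 g k = red_y A b y0 k \<and> cd_r A b y0 g k = red_r A b y0 k"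
      proof (cases "k = Suc m")
        case True
        have "red_y A b y0 m = cd_y A b y0 g m" "red_r A b y0 m = cd_r A b y0 g m" "red_p A b y0 m = cd_p A b y0 g m"
          using E[of m] by auto
        then show ?thesis using True by (simp add: red_Suc Y_Suc R_Suc cd_a_def)
      next
        case False then show ?thesis using E[of k] k by auto
      qed
    qed
    show "\<forall>k\<le>m. cd_p A b y0 g k = red_p A b y0 k" using E by auto
    show "\<forall>k<m. red_g A b y0 k = g k" using E by auto
  next
    assume H: "\<forall>k<m. g k = - cd_a A b y0 g k"
    show "gamma_rec A b y0 g m" unfolding gamma_rec_def
    proof (intro allI impI)
      fix k assume k: "1 \<le> k \<and> k < m"
      then obtain j where j: "k = Suc j" by (cases k) auto
      have "\<forall>i\<le>j. g i = - cd_a A b y0 g i" using H k j by auto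
      moreover have "j < m" using k j by simp
      ultimately have kk: "cd_r A b y0 g (Suc j) \<bullet> cd_p A b y0 g (Suc j) =
       (g j)^2 * (norm (A *v cd_p A b y0 g j))^2 + g j * (cd_p A b y0 g j \<bullet> (A *v cd_p A b y0 g j))"
            using key by blast
      have "g (Suc j) = - cd_a A b y0 g (Suc j)" using H k j by auto
      then show "g k = - (g (k - 1) ^ 2 * (norm (A *v cd_p A b y0 g (k - 1)))^2
              + g (k - 1) * (cd_p A b y0 g (k - 1) \<bullet> (A *v cd_p A b y0 g (k - 1))))
           / (cd_p A b y0 g k \<bullet> (A *v cd_p A b y0 g k))"
        using kk k j by (simp add: cd_a_def add_divide_distrib diff_divide_distrib)
    qed
  qed
qed

end
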